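(* For each integer $k\ge 4$ and each integer $w\ge 4$, $m_2^{(2)}(k-1,w)$ equals the Griesmer upper bound for $m_2^{(2)}(k-1,w)$, i.e. the largest integer $n$ with $n\ge g_2^{(k-3)}(k,n-w)$.
   Context: For a prime power $q$ and $N\ge1$, a multiset of points in $\mathrm{PG}(N,q)$ is a map $\mathcal{K}$ from the points to $\mathbb{Z}_{\ge0}$, with $\mathcal{K}(S)=\sum_{P\in S}\mathcal{K}(P)$; its cardinality is $\mathcal{K}(\mathrm{PG}(N,q))$. Dimensions are projective. For $0\le r\le N-1$ and a positive integer $w$, $m_q^{(r)}(N,w)$ is the maximum cardinality of a multiset of points in $\mathrm{PG}(N,q)$ such that every $r$-dimensional subspace has multiplicity at most $w$. Let $v_j=(q^j-1)/(q-1)$ and, for $1\le s\le k$, $g_q^{(s)}(k,d)=d+\sum_{i=1}^{k-s}\lceil d/(q^iv_s)\rceil$. The Griesmer upper bound for $m_q^{(r)}(N,w)$ is the largest integer $n$ with $n\ge g_q^{(N-r)}(N+1,n-w)$. *)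

theory Defs
  imports Complex_Main
begin

text \<open>A projective point is a 1-dimensional linear subspace; a projective
  r-dimensional subspace is an (r+1)-dimensional linear subspace.\<close>

definition vecs :: "nat \<Rightarrow> (nat \<Rightarrow> 'a::field) set" where
  "vecs N = {v. \<forall>i>N. v i = 0}"

definition lin_subspace_dim :: "nat \<Rightarrow> nat \<Rightarrow> (nat \<Rightarrow> 'a::field) set \<Rightarrow> bool" where
  "lin_subspace_dim N d U \<longleftrightarrow>
     (\<exists>b :: nat \<Rightarrow> nat \<Rightarrow> 'a.
        (\<forall>j<d. b j \<in> vecs N) \<and>
        (\<forall>c :: nat \<Rightarrow> 'a. (\<lambda>i. \<Sum>j<d. c j * b j i) = (\<lambda>i. 0) \<longrightarrow> (\<forall>j<d. c j = 0)) \<and>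
        U = {(\<lambda>i. \<Sum>j<d. c j * b j i) | c :: nat \<Rightarrow> 'a. True})"

definition proj_points :: "nat \<Rightarrow> (nat \<Rightarrow> 'a::field) set set" where
  "proj_points N = {P. lin_subspace_dim N 1 P}"

definition proj_subspaces :: "nat \<Rightarrow> nat \<Rightarrow> (nat \<Rightarrow> 'a::field) set set" where
  "proj_subspaces N r = {S. lin_subspace_dim N (r + 1) S}"

definition mult_of :: "nat \<Rightarrow> ((nat \<Rightarrow> 'a::field) set \<Rightarrow> nat) \<Rightarrow> (nat \<Rightarrow> 'a) set \<Rightarrow> nat" where
  "mult_of N K S = (\<Sum>P\<in>{P \<in> proj_points N. P \<subseteq> S}. K P)"

definition ms_card :: "nat \<Rightarrow> ((nat \<Rightarrow> 'a::field) set \<Rightarrow> nat) \<Rightarrow> nat" where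
  "ms_card N K = (\<Sum>P\<in>proj_points N. K P)"

text \<open>m_q^(r)(N,w) for q = CARD('a): maximum cardinality of a multiset of
  points of PG(N,q) such that every r-dimensional subspace has multiplicity at most w.\<close>
definition m_max :: "'a::{finite,field} itself \<Rightarrow> nat \<Rightarrow> nat \<Rightarrow> nat \<Rightarrow> nat" where
  "m_max TYPE('a) r N w =
     (GREATEST n. \<exists>K :: (nat \<Rightarrow> 'a) set \<Rightarrow> nat.
        ms_card N K = n \<and> (\<forall>S \<in> proj_subspaces N r. mult_of N K S \<le> w))"

definition vq :: "nat \<Rightarrow> nat \<Rightarrow> int" where
  "vq q j = (int q ^ j - 1) div (int q - 1)"

definition griesmer_g :: "nat \<Rightarrow> nat \<Rightarrow> nat \<Rightarrow> int \<Rightarrow> int" where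
  "griesmer_g q s k d = d + (\<Sum>i = 1..k - s. \<lceil>real_of_int d / (real q ^ i * real_of_int (vq q s))\<rceil>)"

definition griesmer_bound :: "nat \<Rightarrow> nat \<Rightarrow> nat \<Rightarrow> nat \<Rightarrow> int" where
  "griesmer_bound q r N w = (GREATEST n :: int. n \<ge> griesmer_g q (N - r) (N + 1) (n - int w))"

end

theory Submission
  imports Defs "HOL-Library.FuncSet"
begin


lemma gf2_univ:
  assumes "card (UNIV :: 'a::{finite,field} set) = 2"
  shows "(UNIV :: 'a set) = {0, 1}"
proof -
  have "{0,1} \<subseteq> (UNIV :: 'a set)" by simp
  moreover have "card {0, 1::'a} = 2" by simp
  ultimately show ?thesis using assms
    by (metis card_subset_eq finite)
qed

lemma gf2_cases:
  assumes "card (UNIV :: 'a::{finite,field} set) = 2"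
  shows "(x::'a) = 0 \<or> x = 1"
  using gf2_univ[OF assms] by blast

lemma gf2_two:
  assumes "card (UNIV :: 'a::{finite,field} set) = 2"
  shows "(1::'a) + 1 = 0"
proof -
  have "(1::'a) + 1 = 0 \<or> (1::'a) + 1 = 1" using gf2_cases[OF assms] by blast
  moreover have "(1::'a) + 1 \<noteq> 1"
  proof
    assume h: "(1::'a) + 1 = 1"
    then have "(1::'a) + 1 = 1 + 0" by simp
    then have "(1::'a) = 0" using add_left_cancel by blast
    then show False by simp
  qed
  ultimately show ?thesis by blast
qed

lemma gf2_add_self:
  assumes "card (UNIV :: 'a::{finite,field} set) = 2"
  shows "(x::'a) + x = 0"
  using gf2_cases[OF assms, of x] gf2_two[OF assms] by auto

lemma gf2_add_eq0:
  assumes "card (UNIV :: 'a::{finite,field} set) = 2"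
  shows "((x::'a) + y = 0) = (x = y)"
proof
  assume "x + y = 0"
  then have "y = - x" by (simp add: eq_neg_iff_add_eq_0 add.commute)
  moreover have "- x = x" using gf2_add_self[OF assms, of x] by (simp add: add_eq_0_iff)
  ultimately show "x = y" by simp
next
  assume "x = y" then show "x + y = 0" using gf2_add_self[OF assms] by simp
qed



definition z0 :: "nat \<Rightarrow> 'a::field" where "z0 = (\<lambda>_. 0)"
definition vadd :: "(nat \<Rightarrow> 'a::field) \<Rightarrow> (nat \<Rightarrow> 'a) \<Rightarrow> nat \<Rightarrow> 'a" where
  "vadd x y = (\<lambda>i. x i + y i)"

lemma z0_vecs: "z0 \<in> vecs N" by (simp add: z0_def vecs_def)
lemma vadd_vecs: "x \<in> vecs N \<Longrightarrow> y \<in> vecs N \<Longrightarrow> vadd x y \<in> vecs N"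
  by (simp add: vadd_def vecs_def)

lemma vadd_comm: "vadd x y = vadd y x" by (auto simp: vadd_def add.commute)
lemma vadd_assoc: "vadd (vadd x y) z = vadd x (vadd y z)" by (auto simp: vadd_def add.assoc)
lemma vadd_z0[simp]: "vadd x z0 = x" "vadd z0 x = x" by (auto simp: vadd_def z0_def)

context
  fixes TYA :: "'a::{finite,field} itself"
  assumes gf2: "card (UNIV :: 'a set) = 2"
begin

lemma vadd_self[simp]: "vadd x x = (z0 :: nat \<Rightarrow> 'a)"
  by (auto simp: vadd_def z0_def gf2_add_self[OF gf2])

lemma vadd_eq_z0: "(vadd x y = (z0 :: nat \<Rightarrow> 'a)) = (x = y)"
proof
  assume "vadd x y = z0"
  then have "\<And>i. x i + y i = 0" by (metis vadd_def z0_def)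
  then show "x = y" using gf2_add_eq0[OF gf2] by blast
qed simp

lemma vadd_cancel[simp]: "vadd (vadd x y) y = (x :: nat \<Rightarrow> 'a)" "vadd (vadd y x) y = x"
   "vadd y (vadd y x) = x" "vadd y (vadd x y) = x"
proof -
  show 1: "vadd (vadd x y) y = x" by (simp add: vadd_assoc)
  show "vadd (vadd y x) y = x" using 1 by (simp add: vadd_comm[of y x])
  show 3: "vadd y (vadd y x) = x" by (simp add: vadd_assoc[symmetric])
  show "vadd y (vadd x y) = x" using 3 by (simp add: vadd_comm[of y x])
qed

lemma vadd_eq_self: "(vadd x y = (x :: nat \<Rightarrow> 'a)) = (y = z0)" "(vadd y x = (x :: nat \<Rightarrow> 'a)) = (y = z0)"
  by (metis vadd_cancel vadd_z0 vadd_comm)+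

lemma vadd_eq_iff: "(vadd x y = (z :: nat \<Rightarrow> 'a)) = (y = vadd x z)"
  by (metis vadd_cancel vadd_comm)

end



definition lc3 :: "(nat \<Rightarrow> 'a::field) \<Rightarrow> (nat \<Rightarrow> 'a) \<Rightarrow> (nat \<Rightarrow> 'a) \<Rightarrow> 'a \<Rightarrow> 'a \<Rightarrow> 'a \<Rightarrow> nat \<Rightarrow> 'a" where
  "lc3 a b c x y z = (\<lambda>i. x * a i + y * b i + z * c i)"
definition ind3 :: "(nat \<Rightarrow> 'a::field) \<Rightarrow> (nat \<Rightarrow> 'a) \<Rightarrow> (nat \<Rightarrow> 'a) \<Rightarrow> bool" where
  "ind3 a b c \<longleftrightarrow> (\<forall>x y z. lc3 a b c x y z = z0 \<longrightarrow> x = 0 \<and> y = 0 \<and> z = 0)"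
definition span3 :: "(nat \<Rightarrow> 'a::field) \<Rightarrow> (nat \<Rightarrow> 'a) \<Rightarrow> (nat \<Rightarrow> 'a) \<Rightarrow> (nat \<Rightarrow> 'a) set" where
  "span3 a b c = {lc3 a b c x y z | x y z. True}"

lemma sum3: "(\<Sum>j<(3::nat). c j * b j i) = c 0 * b 0 i + c 1 * b 1 i + c 2 * (b 2 i :: 'a::field)"
  by (simp add: eval_nat_numeral)

lemma plane_char:
  "lin_subspace_dim N 3 S \<longleftrightarrow>
    (\<exists>a b c. a \<in> vecs N \<and> b \<in> vecs N \<and> c \<in> vecs N \<and> ind3 a b c \<and> S = span3 a b c)"
  (is "?L \<longleftrightarrow> ?R")
proof
  assume ?L
  then obtain bb :: "nat \<Rightarrow> nat \<Rightarrow> 'a" where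
    b1: "\<forall>j<3. bb j \<in> vecs N" and
    b2: "\<forall>c :: nat \<Rightarrow> 'a. (\<lambda>i. \<Sum>j<3. c j * bb j i) = (\<lambda>i. 0) \<longrightarrow> (\<forall>j<3. c j = 0)" and
    b3: "S = {(\<lambda>i. \<Sum>j<3. c j * bb j i) | c :: nat \<Rightarrow> 'a. True}"
    unfolding lin_subspace_dim_def by blast
  have "ind3 (bb 0) (bb 1) (bb 2)"
    unfolding ind3_def
  proof (intro allI impI)
    fix x y z :: 'a
    assume h: "lc3 (bb 0) (bb 1) (bb 2) x y z = z0"
    define c where "c = (\<lambda>j::nat. if j = 0 then x else if j = 1 then y else z)"
    have "(\<lambda>i. \<Sum>j<3. c j * bb j i) = (\<lambda>i. 0)"
      using h by (simp only: sum3) (simp add: c_def lc3_def z0_def)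
    then have "\<forall>j<3. c j = 0" using b2 by blast
    then show "x = 0 \<and> y = 0 \<and> z = 0" by (auto simp: c_def dest: spec[of _ 0] spec[of _ 1] spec[of _ 2])
  qed
  moreover have "S = span3 (bb 0) (bb 1) (bb 2)"
  proof
    show "S \<subseteq> span3 (bb 0) (bb 1) (bb 2)"
      unfolding b3 span3_def lc3_def by (auto simp: sum3)
  next
    show "span3 (bb 0) (bb 1) (bb 2) \<subseteq> S"
    proof
      fix v assume "v \<in> span3 (bb 0) (bb 1) (bb 2)"
      then obtain x y z where v: "v = lc3 (bb 0) (bb 1) (bb 2) x y z" unfolding span3_def by blast
      define c where "c = (\<lambda>j::nat. if j = 0 then x else if j = 1 then y else z)"
      have "v = (\<lambda>i. \<Sum>j<3. c j * bb j i)" by (simp only: sum3) (simp add: v c_def lc3_def)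
      then show "v \<in> S" unfolding b3 by blast
    qed
  qed
  ultimately show ?R using b1 by (metis zero_less_numeral one_less_numeral_iff semiring_norm(76) lessI numeral_2_eq_2 numeral_3_eq_3 less_Suc_eq)
next
  assume ?R
  then obtain a b c where abc: "a \<in> vecs N" "b \<in> vecs N" "c \<in> vecs N" "ind3 a b c" "S = span3 a b c" by blast
  define bb where "bb = (\<lambda>j::nat. if j = 0 then a else if j = 1 then b else c)"
  have "\<forall>j<3. bb j \<in> vecs N" using abc by (simp add: bb_def)
  moreover have "\<forall>cc :: nat \<Rightarrow> 'a. (\<lambda>i. \<Sum>j<3. cc j * bb j i) = (\<lambda>i. 0) \<longrightarrow> (\<forall>j<3. cc j = 0)"
  proof (intro allI impI)
    fix cc :: "nat \<Rightarrow> 'a" and j :: nat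
    assume h: "(\<lambda>i. \<Sum>j<3. cc j * bb j i) = (\<lambda>i. 0)" and j: "j < 3"
    have "lc3 a b c (cc 0) (cc 1) (cc 2) = z0" using h by (simp only: sum3) (simp add: bb_def lc3_def z0_def)
    then have "cc 0 = 0 \<and> cc 1 = 0 \<and> cc 2 = 0" using abc(4) unfolding ind3_def by blast
    then show "cc j = 0" using j by (auto simp: eval_nat_numeral less_Suc_eq)
  qed
  moreover have "S = {(\<lambda>i. \<Sum>j<3. cc j * bb j i) | cc :: nat \<Rightarrow> 'a. True}"
  proof
    show "{(\<lambda>i. \<Sum>j<3. cc j * bb j i) | cc :: nat \<Rightarrow> 'a. True} \<subseteq> S"
      unfolding abc(5) span3_def lc3_def by (simp only: sum3) (auto simp: bb_def)
  next
    show "S \<subseteq> {(\<lambda>i. \<Sum>j<3. cc j * bb j i) | cc :: nat \<Rightarrow> 'a. True}"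
    proof
      fix v assume "v \<in> S"
      then obtain x y z where v: "v = lc3 a b c x y z" unfolding abc(5) span3_def by blast
      define cc where "cc = (\<lambda>j::nat. if j = 0 then x else if j = 1 then y else z)"
      have "v = (\<lambda>i. \<Sum>j<3. cc j * bb j i)" by (simp only: sum3) (simp add: v cc_def bb_def lc3_def)
      then show "v \<in> {(\<lambda>i. \<Sum>j<3. cc j * bb j i) | cc :: nat \<Rightarrow> 'a. True}" by blast
    qed
  qed
  ultimately show ?L unfolding lin_subspace_dim_def by blast
qed

context
  fixes TYA :: "'a::{finite,field} itself"
  assumes gf2: "card (UNIV :: 'a set) = 2"
begin

lemma point_char:
  "lin_subspace_dim N 1 (P :: (nat \<Rightarrow> 'a) set) \<longleftrightarrow> (\<exists>x. x \<in> vecs N \<and> x \<noteq> z0 \<and> P = {z0, x})"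
  (is "?L \<longleftrightarrow> ?R")
proof
  assume ?L
  then obtain bb :: "nat \<Rightarrow> nat \<Rightarrow> 'a" where
    b1: "bb 0 \<in> vecs N" and
    b2: "\<forall>c :: nat \<Rightarrow> 'a. (\<lambda>i. c 0 * bb 0 i) = (\<lambda>i. 0) \<longrightarrow> c 0 = 0" and
    b3: "P = {(\<lambda>i. c 0 * bb 0 i) | c :: nat \<Rightarrow> 'a. True}"
    unfolding lin_subspace_dim_def by auto
  have nz: "bb 0 \<noteq> z0"
  proof
    assume "bb 0 = z0"
    then have "(\<lambda>i. (\<lambda>_. 1::'a) 0 * bb 0 i) = (\<lambda>i. 0)" by (simp add: z0_def)
    then have "(1::'a) = 0" using b2[rule_format, of "\<lambda>_. 1"] by simp
    then show False by simp
  qed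
  have "P = {z0, bb 0}"
  proof
    show "P \<subseteq> {z0, bb 0}"
    proof
      fix v assume "v \<in> P"
      then obtain c :: "nat \<Rightarrow> 'a" where v: "v = (\<lambda>i. c 0 * bb 0 i)" using b3 by blast
      show "v \<in> {z0, bb 0}" using gf2_cases[OF gf2, of "c 0"] v by (auto simp: z0_def)
    qed
  next
    have "z0 \<in> P" unfolding b3 z0_def by (intro CollectI exI[of _ "\<lambda>_. 0"]) simp
    moreover have "bb 0 \<in> P" unfolding b3 by (intro CollectI exI[of _ "\<lambda>_. 1"]) simp
    ultimately show "{z0, bb 0} \<subseteq> P" by blast
  qed
  then show ?R using b1 nz by blast
next
  assume ?R
  then obtain x where x: "x \<in> vecs N" "x \<noteq> z0" "P = {z0, x}" by blast
  obtain i where i: "x i \<noteq> 0" using x(2) by (auto simp: z0_def)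
  define bb where "bb = (\<lambda>j::nat. x)"
  have "\<forall>j<1. bb j \<in> vecs N" using x by (simp add: bb_def)
  moreover have "\<forall>c :: nat \<Rightarrow> 'a. (\<lambda>i. \<Sum>j<1. c j * bb j i) = (\<lambda>i. 0) \<longrightarrow> (\<forall>j<1. c j = 0)"
  proof (intro allI impI)
    fix c :: "nat \<Rightarrow> 'a" and j :: nat
    assume "(\<lambda>i. \<Sum>j<1. c j * bb j i) = (\<lambda>i. 0)" and j: "j < 1"
    then have "c 0 * x i = 0" by (simp add: bb_def fun_eq_iff del: mult_eq_0_iff)
    then show "c j = 0" using i j by simp
  qed
  moreover have "P = {(\<lambda>i. \<Sum>j<1. c j * bb j i) | c :: nat \<Rightarrow> 'a. True}"
  proof
    show "{(\<lambda>i. \<Sum>j<1. c j * bb j i) | c :: nat \<Rightarrow> 'a. True} \<subseteq> P"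
    proof
      fix v assume "v \<in> {(\<lambda>i. \<Sum>j<1. c j * bb j i) | c :: nat \<Rightarrow> 'a. True}"
      then obtain c :: "nat \<Rightarrow> 'a" where v: "v = (\<lambda>i. c 0 * x i)" by (auto simp: bb_def)
      show "v \<in> P" using gf2_cases[OF gf2, of "c 0"] v x(3) by (auto simp: z0_def)
    qed
  next
    have "z0 \<in> {(\<lambda>i. \<Sum>j<1. c j * bb j i) | c :: nat \<Rightarrow> 'a. True}" unfolding z0_def by (intro CollectI exI[of _ "\<lambda>_. 0"]) simp
    moreover have "x \<in> {(\<lambda>i. \<Sum>j<1. c j * bb j i) | c :: nat \<Rightarrow> 'a. True}" by (intro CollectI exI[of _ "\<lambda>_. 1"]) (simp add: bb_def)
    ultimately show "P \<subseteq> {(\<lambda>i. \<Sum>j<1. c j * bb j i) | c :: nat \<Rightarrow> 'a. True}"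
      unfolding x(3) by blast
  qed
  ultimately show ?L unfolding lin_subspace_dim_def by blast
qed

end


definition ev :: "nat \<Rightarrow> nat \<Rightarrow> 'a::field" where "ev i = (\<lambda>j. if j = i then 1 else 0)"

lemma ev_vecs: "i \<le> N \<Longrightarrow> ev i \<in> vecs N" by (auto simp: ev_def vecs_def)
lemma ev_nz: "ev i \<noteq> z0" by (auto simp: ev_def z0_def fun_eq_iff)

lemma span3_vecs: "a \<in> vecs N \<Longrightarrow> b \<in> vecs N \<Longrightarrow> c \<in> vecs N \<Longrightarrow> span3 a b c \<subseteq> vecs N"
  by (auto simp: span3_def lc3_def vecs_def)

lemma z0_span3: "z0 \<in> span3 a b c"
  unfolding span3_def lc3_def z0_def by (intro CollectI exI[of _ 0]) simp

lemma pair_inj: "inj_on (\<lambda>x. {z0, x}) (UNIV - {z0})"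
  by (auto simp: inj_on_def doubleton_eq_iff)

lemma vecs_fin_card:
  assumes gf2: "card (UNIV :: 'a::{finite,field} set) = 2"
  shows "finite (vecs N :: (nat \<Rightarrow> 'a) set) \<and> card (vecs N :: (nat \<Rightarrow> 'a) set) = 2 ^ (N+1)"
proof -
  have bij: "bij_betw (\<lambda>x. restrict x {..N}) (vecs N :: (nat \<Rightarrow> 'a) set) (PiE {..N} (\<lambda>_. UNIV))"
  proof (rule bij_betw_imageI)
    show "inj_on (\<lambda>x. restrict x {..N}) (vecs N :: (nat \<Rightarrow> 'a) set)"
    proof (rule inj_onI)
      fix x y :: "nat \<Rightarrow> 'a" assume h: "x \<in> vecs N" "y \<in> vecs N" "restrict x {..N} = restrict y {..N}"
      show "x = y"
      proof
        fix i
        show "x i = y i"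
        proof (cases "i \<le> N")
          case True
          then show ?thesis using h(3) by (metis atMost_iff restrict_apply')
        next
          case False
          then show ?thesis using h(1,2) by (simp add: vecs_def)
        qed
      qed
    qed
  next
    show "(\<lambda>x. restrict x {..N}) ` (vecs N :: (nat \<Rightarrow> 'a) set) = PiE {..N} (\<lambda>_. UNIV)"
    proof
      show "(\<lambda>x. restrict x {..N}) ` (vecs N :: (nat \<Rightarrow> 'a) set) \<subseteq> PiE {..N} (\<lambda>_. UNIV)" by (intro image_subsetI) (simp only: restrict_PiE_iff, simp)
    next
      show "PiE {..N} (\<lambda>_. UNIV) \<subseteq> (\<lambda>x. restrict x {..N}) ` (vecs N :: (nat \<Rightarrow> 'a) set)"
      proof
        fix y :: "nat \<Rightarrow> 'a" assume y: "y \<in> PiE {..N} (\<lambda>_. UNIV)"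
        define x where "x = (\<lambda>i. if i \<le> N then y i else 0)"
        have "x \<in> vecs N" by (auto simp: x_def vecs_def)
        moreover have "restrict x {..N} = y" using y
          by (auto simp: x_def restrict_def fun_eq_iff PiE_def extensional_def)
        ultimately show "y \<in> (\<lambda>x. restrict x {..N}) ` (vecs N :: (nat \<Rightarrow> 'a) set)" by blast
      qed
    qed
  qed
  have "card (PiE {..N} (\<lambda>_. (UNIV :: 'a set))) = 2 ^ (N+1)"
    by (simp add: card_PiE gf2)
  moreover have "finite (PiE {..N} (\<lambda>_. (UNIV :: 'a set)))" by (simp add: finite_PiE)
  ultimately show ?thesis using bij bij_betw_finite bij_betw_same_card by metis
qed

context
  fixes TYA :: "'a::{finite,field} itself"
  assumes gf2: "card (UNIV :: 'a set) = 2"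
begin

lemma proj_points_eq: "(proj_points N :: (nat \<Rightarrow> 'a) set set) = (\<lambda>x. {z0, x}) ` (vecs N - {z0})"
  unfolding proj_points_def using point_char[OF gf2] by auto

lemma sub_points_eq:
  assumes "z0 \<in> S"
  shows "{P \<in> (proj_points N :: (nat \<Rightarrow> 'a) set set). P \<subseteq> S} = (\<lambda>x. {z0, x}) ` ((S \<inter> vecs N) - {z0})"
  using assms unfolding proj_points_eq by auto

lemma mult_of_eq:
  assumes "z0 \<in> (S :: (nat \<Rightarrow> 'a) set)"
  shows "mult_of N K S = (\<Sum>x\<in>(S \<inter> vecs N) - {z0}. K {z0, x})"
proof -
  have "inj_on (\<lambda>x. {z0, x}) ((S \<inter> vecs N) - {z0})" using pair_inj by (rule inj_on_subset) auto
  then show ?thesis unfolding mult_of_def sub_points_eq[OF assms]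
    by (simp add: sum.reindex)
qed

lemma ms_card_eq:
  shows "ms_card N K = (\<Sum>x\<in>(vecs N :: (nat \<Rightarrow> 'a) set) - {z0}. K {z0, x})"
proof -
  have "inj_on (\<lambda>x. {z0, x}) ((vecs N :: (nat \<Rightarrow> 'a) set) - {z0})" using pair_inj by (rule inj_on_subset) auto
  then show ?thesis unfolding ms_card_def proj_points_eq
    by (simp add: sum.reindex)
qed

lemma halve:
  assumes fin: "finite (V :: (nat \<Rightarrow> 'a) set)" and cl: "\<And>x. x \<in> V \<Longrightarrow> vadd x e \<in> V"
    and e: "e i0 = 1" and Q: "\<And>x. Q (vadd x e) = Q x"
  shows "card {x \<in> V. Q x} = 2 * card {x \<in> V. Q x \<and> x i0 = 0}"
proof -
  let ?A = "{x \<in> V. Q x \<and> x i0 = 0}" and ?B = "{x \<in> V. Q x \<and> x i0 \<noteq> 0}"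
  have vi: "vadd x e i0 = x i0 + 1" for x by (simp add: vadd_def e)
  have inj: "inj_on (\<lambda>x. vadd x e) ?A"
    by (rule inj_onI) (metis vadd_cancel(1)[OF gf2])
  have img: "(\<lambda>x. vadd x e) ` ?A = ?B"
  proof
    show "(\<lambda>x. vadd x e) ` ?A \<subseteq> ?B" using cl Q vi by auto
  next
    show "?B \<subseteq> (\<lambda>x. vadd x e) ` ?A"
    proof
      fix y assume y: "y \<in> ?B"
      then have "y i0 = 1" using gf2_cases[OF gf2, of "y i0"] by auto
      then have "vadd y e \<in> ?A" using y cl Q vi gf2_two[OF gf2] by auto
      moreover have "y = vadd (vadd y e) e" using vadd_cancel(1)[OF gf2] by simp
      ultimately show "y \<in> (\<lambda>x. vadd x e) ` ?A" by blast
    qed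
  qed
  have "card ?B = card ?A" using card_image[OF inj] img by simp
  moreover have "{x \<in> V. Q x} = ?A \<union> ?B" by auto
  moreover have "card (?A \<union> ?B) = card ?A + card ?B"
    by (rule card_Un_disjoint) (use fin in auto)
  ultimately show ?thesis by simp
qed

lemma vecs_fin: "finite (vecs N :: (nat \<Rightarrow> 'a) set)" using vecs_fin_card[OF gf2] by blast
lemma vecs_card: "card (vecs N :: (nat \<Rightarrow> 'a) set) = 2 ^ (N+1)" using vecs_fin_card[OF gf2] by blast

lemma count_x0:
  "card {x \<in> (vecs N :: (nat \<Rightarrow> 'a) set). x 0 = 0} = 2 ^ N"
proof -
  have "card {x \<in> (vecs N :: (nat \<Rightarrow> 'a) set). True} = 2 * card {x \<in> (vecs N :: (nat \<Rightarrow> 'a) set). True \<and> x 0 = 0}"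
    by (rule halve[where e = "ev 0"]) (auto simp: vecs_fin intro!: vadd_vecs ev_vecs, simp add: ev_def)
  then show ?thesis using vecs_card by simp
qed

lemma count_x01:
  assumes "N \<ge> 1"
  shows "card {x \<in> (vecs N :: (nat \<Rightarrow> 'a) set). x 0 = 0 \<and> x 1 = 0} = 2 ^ (N - 1)"
proof -
  have "card {x \<in> (vecs N :: (nat \<Rightarrow> 'a) set). x 0 = 0} = 2 * card {x \<in> (vecs N :: (nat \<Rightarrow> 'a) set). x 0 = 0 \<and> x 1 = 0}"
    by (rule halve[where e = "ev 1"]) (use assms in \<open>auto simp: vecs_fin intro!: vadd_vecs ev_vecs, auto simp: ev_def vadd_def\<close>)
  moreover have "(2::nat) ^ N = 2 * 2 ^ (N - 1)" using assms
    by (metis Suc_pred' less_le_trans power_Suc zero_less_one)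
  ultimately show ?thesis using count_x0 by simp
qed

end


context
  fixes TYA :: "'a::{finite,field} itself"
  assumes gf2: "card (UNIV :: 'a set) = 2"
begin

lemma span3_img: "span3 a b c = (\<lambda>(x,y,z). lc3 a b c x y z) ` (UNIV :: ('a \<times> 'a \<times> 'a) set)"
proof
  show "span3 a b c \<subseteq> (\<lambda>(x,y,z). lc3 a b c x y z) ` (UNIV :: ('a \<times> 'a \<times> 'a) set)"
  proof
    fix v assume "v \<in> span3 a b c"
    then obtain x y z where "v = lc3 a b c x y z" unfolding span3_def by blast
    then have "v = (\<lambda>(x,y,z). lc3 a b c x y z) (x,y,z)" by simp
    then show "v \<in> (\<lambda>(x,y,z). lc3 a b c x y z) ` (UNIV :: ('a \<times> 'a \<times> 'a) set)" by blast
  qed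
qed (auto simp: span3_def)

lemma card_span3:
  assumes "ind3 a b (c :: nat \<Rightarrow> 'a)"
  shows "finite (span3 a b c) \<and> card (span3 a b c) = 8"
proof -
  have key: "x = x' \<and> y = y' \<and> z = z'" if h: "lc3 a b c x y z = lc3 a b c x' y' z'" for x y z x' y' z' :: 'a
  proof -
    have "lc3 a b c (x - x') (y - y') (z - z') = z0"
    proof
      fix i
      have "x * a i + y * b i + z * c i = x' * a i + y' * b i + z' * c i"
        using h unfolding lc3_def by meson
      then show "lc3 a b c (x - x') (y - y') (z - z') i = z0 i"
        unfolding lc3_def z0_def by (simp add: algebra_simps)
    qed
    then show "x = x' \<and> y = y' \<and> z = z'" using assms unfolding ind3_def by fastforce
  qed
  have inj: "inj_on (\<lambda>(x,y,z). lc3 a b c x y z) (UNIV :: ('a \<times> 'a \<times> 'a) set)"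
    by (rule inj_onI) (use key in auto)
  have "card (UNIV :: ('a \<times> 'a \<times> 'a) set) = card (UNIV::'a set) * (card (UNIV::'a set) * card (UNIV::'a set))"
    by (metis UNIV_Times_UNIV card_cartesian_product)
  then have "card (UNIV :: ('a \<times> 'a \<times> 'a) set) = 8" using gf2 by simp
  then show ?thesis unfolding span3_img using card_image[OF inj] by simp
qed

lemma span3_add:
  assumes "u \<in> span3 a b c" "v \<in> span3 a b (c :: nat \<Rightarrow> 'a)"
  shows "vadd u v \<in> span3 a b c"
proof -
  obtain x y z where u: "u = lc3 a b c x y z" using assms(1) unfolding span3_def by blast
  obtain x' y' z' where v: "v = lc3 a b c x' y' z'" using assms(2) unfolding span3_def by blast
  have "vadd u v = lc3 a b c (x + x') (y + y') (z + z')"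
    unfolding u v vadd_def lc3_def by (simp add: algebra_simps)
  then show ?thesis unfolding span3_def by blast
qed

lemma plane_x0:
  assumes "ind3 a b (c :: nat \<Rightarrow> 'a)"
  shows "card {x \<in> span3 a b c. x j \<noteq> 0} \<le> 4"
proof (cases "{x \<in> span3 a b c. x j \<noteq> 0} = {}")
  case True then show ?thesis unfolding True by simp
next
  case False
  let ?S = "span3 a b c"
  let ?A = "{x \<in> ?S. x j \<noteq> 0}"
  obtain s where s: "s \<in> ?A" using False by blast
  have s1: "s j = 1" using s gf2_cases[OF gf2, of "s j"] by auto
  have fin: "finite ?S" and c8: "card ?S = 8" using card_span3[OF assms] by auto
  have inj: "inj_on (\<lambda>x. vadd x s) ?A"
    by (rule inj_onI) (metis vadd_cancel(1)[OF gf2])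
  have sub: "(\<lambda>x. vadd x s) ` ?A \<subseteq> ?S - ?A"
  proof
    fix y assume "y \<in> (\<lambda>x. vadd x s) ` ?A"
    then obtain x where x: "x \<in> ?A" "y = vadd x s" by blast
    have "x j = 1" using x gf2_cases[OF gf2, of "x j"] by auto
    then have "y j = 0" using x s1 gf2_two[OF gf2] by (simp add: vadd_def)
    moreover have "y \<in> ?S" using x s span3_add by blast
    ultimately show "y \<in> ?S - ?A" by blast
  qed
  have "card ?A = card ((\<lambda>x. vadd x s) ` ?A)" using card_image[OF inj] by simp
  also have "\<dots> \<le> card (?S - ?A)" using sub fin by (intro card_mono) auto
  also have "\<dots> = 8 - card ?A" using fin c8 by (subst card_Diff_subset) auto
  finally show ?thesis by simp
qed

lemma plane_x01:
  assumes "ind3 a b (c :: nat \<Rightarrow> 'a)"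
  shows "\<exists>z \<in> span3 a b c. z \<noteq> z0 \<and> z 0 = 0 \<and> z 1 = 0"
proof -
  let ?S = "span3 a b c"
  have fin: "finite ?S" and c8: "card ?S = 8" using card_span3[OF assms] by auto
  have "\<not> inj_on (\<lambda>x. (x 0, x 1)) ?S"
  proof
    assume "inj_on (\<lambda>x. (x 0, x 1)) ?S"
    then have "card ?S \<le> card (UNIV :: ('a \<times> 'a) set)"
      by (rule card_inj_on_le) auto
    moreover have "card (UNIV :: ('a \<times> 'a) set) = card (UNIV::'a set) * card (UNIV::'a set)"
      by (metis UNIV_Times_UNIV card_cartesian_product)
    then have "card (UNIV :: ('a \<times> 'a) set) = 4" using gf2 by simp
    ultimately show False using c8 by simp
  qed
  then obtain x y where xy: "x \<in> ?S" "y \<in> ?S" "x \<noteq> y" "x 0 = y 0" "x 1 = y 1"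
    unfolding inj_on_def by auto
  have "vadd x y \<in> ?S" using xy span3_add by blast
  moreover have "vadd x y \<noteq> z0" using xy vadd_eq_z0[OF gf2] by blast
  moreover have "vadd x y 0 = 0" "vadd x y 1 = 0" unfolding vadd_def using xy gf2_add_eq0[OF gf2] by metis+
  ultimately show ?thesis by blast
qed

end


lemma sum_ind: "finite A \<Longrightarrow> (\<Sum>x\<in>A. if P x then 1 else 0 :: nat) = card {x \<in> A. P x}"
  by (simp add: sum.If_cases Int_def conj_commute)

definition Gc :: "nat \<Rightarrow> nat \<Rightarrow> nat \<Rightarrow> nat \<Rightarrow> nat \<Rightarrow> (nat \<Rightarrow> 'a::field) \<Rightarrow> nat" where
  "Gc a1 a4 a6 d0 d1 x = a1 + a4 * (if x 0 \<noteq> 0 then 1 else 0) + a6 * (if x 0 \<noteq> 0 \<or> x 1 \<noteq> 0 then 1 else 0)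
     + d0 * (if x = ev 0 then 1 else 0) + d1 * (if x = ev 1 then 1 else 0)"

definition Kc :: "nat \<Rightarrow> nat \<Rightarrow> nat \<Rightarrow> nat \<Rightarrow> nat \<Rightarrow> (nat \<Rightarrow> 'a::field) set \<Rightarrow> nat" where
  "Kc a1 a4 a6 d0 d1 P = Gc a1 a4 a6 d0 d1 (SOME x. x \<in> P \<and> x \<noteq> z0)"

lemma Kc_pt: "x \<noteq> z0 \<Longrightarrow> Kc a1 a4 a6 d0 d1 {z0, x} = Gc a1 a4 a6 d0 d1 x"
proof -
  assume x: "x \<noteq> z0"
  have "(SOME y. y \<in> {z0, x} \<and> y \<noteq> z0) = x" using x by (intro some_equality) auto
  then show ?thesis unfolding Kc_def by simp
qed

lemma sum_Gc:
  assumes "finite A"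
  shows "(\<Sum>x\<in>A. Gc a1 a4 a6 d0 d1 x) = a1 * card A + a4 * card {x\<in>A. x 0 \<noteq> 0}
     + a6 * card {x\<in>A. x 0 \<noteq> 0 \<or> x 1 \<noteq> 0} + d0 * (if ev 0 \<in> A then 1 else 0) + d1 * (if ev 1 \<in> A then 1 else 0)"
  unfolding Gc_def using assms
  by (simp add: sum.distrib sum_distrib_left[symmetric] sum_ind sum.delta mult.commute)

context
  fixes TYA :: "'a::{finite,field} itself"
  assumes gf2: "card (UNIV :: 'a set) = 2"
begin

lemma constr_plane:
  assumes "S \<in> (proj_subspaces N 2 :: (nat \<Rightarrow> 'a) set set)"
  shows "mult_of N (Kc a1 a4 a6 d0 d1) S \<le> 7 * a1 + 4 * a4 + 6 * a6 + d0 + d1"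
proof -
  have "lin_subspace_dim N 3 S" using assms unfolding proj_subspaces_def by (simp add: numeral_3_eq_3)
  then obtain a b c where abc: "a \<in> vecs N" "b \<in> vecs N" "c \<in> vecs N" "ind3 a b (c :: nat \<Rightarrow> 'a)" "S = span3 a b c"
    unfolding plane_char by blast
  have Ssub: "S \<subseteq> vecs N" using span3_vecs abc by blast
  have z: "z0 \<in> S" using abc z0_span3 by blast
  have fin: "finite S" and c8: "card S = 8" using card_span3[OF gf2 abc(4)] abc(5) by auto
  let ?A = "S - {z0}"
  have eq: "(S \<inter> vecs N) - {z0} = ?A" using Ssub by blast
  have "mult_of N (Kc a1 a4 a6 d0 d1) S = (\<Sum>x\<in>?A. Kc a1 a4 a6 d0 d1 {z0, x})"
    using mult_of_eq[OF gf2 z] eq by simp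
  also have "\<dots> = (\<Sum>x\<in>?A. Gc a1 a4 a6 d0 d1 x)" by (rule sum.cong) (auto simp: Kc_pt)
  also have "\<dots> = a1 * card ?A + a4 * card {x\<in>?A. x 0 \<noteq> 0}
     + a6 * card {x\<in>?A. x 0 \<noteq> 0 \<or> x 1 \<noteq> 0} + d0 * (if ev 0 \<in> ?A then 1 else 0) + d1 * (if ev 1 \<in> ?A then 1 else 0)"
    using fin by (simp add: sum_Gc)
  also have "\<dots> \<le> 7 * a1 + 4 * a4 + 6 * a6 + d0 + d1"
  proof -
    have c7: "card ?A = 7" using c8 z fin by simp
    have "card {x\<in>?A. x 0 \<noteq> 0} \<le> card {x\<in>S. x 0 \<noteq> 0}" using fin by (intro card_mono) auto
    also have "\<dots> \<le> 4" using plane_x0[OF gf2 abc(4)] abc(5) by simp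
    finally have h4: "card {x\<in>?A. x 0 \<noteq> 0} \<le> 4" .
    obtain zz where zz: "zz \<in> S" "zz \<noteq> z0" "zz 0 = 0" "zz 1 = 0" using plane_x01[OF gf2 abc(4)] abc(5) by blast
    have "card {x\<in>?A. x 0 \<noteq> 0 \<or> x 1 \<noteq> 0} \<le> card (?A - {zz})" using fin zz by (intro card_mono) auto
    also have "\<dots> = 6" using c7 zz fin by simp
    finally have h6: "card {x\<in>?A. x 0 \<noteq> 0 \<or> x 1 \<noteq> 0} \<le> 6" .
    have "a1 * card ?A = 7 * a1" using c7 by simp
    moreover have "a4 * card {x\<in>?A. x 0 \<noteq> 0} \<le> 4 * a4" using h4 by simp
    moreover have "a6 * card {x\<in>?A. x 0 \<noteq> 0 \<or> x 1 \<noteq> 0} \<le> 6 * a6" using h6 by simp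
    moreover have "d0 * (if ev 0 \<in> ?A then 1 else 0) \<le> d0" by simp
    moreover have "d1 * (if ev 1 \<in> ?A then 1 else 0) \<le> d1" by simp
    ultimately show ?thesis by linarith
  qed
  finally show ?thesis .
qed

lemma constr_card:
  assumes "N \<ge> 1"
  shows "ms_card N (Kc a1 a4 a6 d0 d1 :: (nat \<Rightarrow> 'a) set \<Rightarrow> nat)
    = a1 * (2^(N+1) - 1) + a4 * 2^N + a6 * (2^(N+1) - 2^(N-1)) + d0 + d1"
proof -
  let ?V = "vecs N :: (nat \<Rightarrow> 'a) set"
  let ?A = "?V - {z0}"
  have fin: "finite ?V" using vecs_fin[OF gf2] .
  have z: "z0 \<in> ?V" by (rule z0_vecs)
  have "ms_card N (Kc a1 a4 a6 d0 d1 :: (nat \<Rightarrow> 'a) set \<Rightarrow> nat) = (\<Sum>x\<in>?A. Kc a1 a4 a6 d0 d1 {z0, x})"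
    using ms_card_eq[OF gf2] by simp
  also have "\<dots> = (\<Sum>x\<in>?A. Gc a1 a4 a6 d0 d1 x)" by (rule sum.cong) (auto simp: Kc_pt)
  also have "\<dots> = a1 * card ?A + a4 * card {x\<in>?A. x 0 \<noteq> 0}
     + a6 * card {x\<in>?A. x 0 \<noteq> 0 \<or> x 1 \<noteq> 0} + d0 * (if ev 0 \<in> ?A then 1 else 0) + d1 * (if ev 1 \<in> ?A then 1 else 0)"
    using fin by (simp add: sum_Gc)
  also have "\<dots> = a1 * (2^(N+1) - 1) + a4 * 2^N + a6 * (2^(N+1) - 2^(N-1)) + d0 + d1"
  proof -
    have cA: "card ?A = 2^(N+1) - 1" using vecs_card[OF gf2] fin z by simp
    have e1: "{x\<in>?A. x 0 \<noteq> 0} = ?V - {x\<in>?V. x 0 = 0}" by (auto simp: z0_def)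
    have c4: "card {x\<in>?A. x 0 \<noteq> 0} = 2^N"
      unfolding e1 using fin vecs_card[OF gf2] count_x0[OF gf2]
      by (subst card_Diff_subset) auto
    have e2: "{x\<in>?A. x 0 \<noteq> 0 \<or> x 1 \<noteq> 0} = ?V - {x\<in>?V. x 0 = 0 \<and> x 1 = 0}" by (auto simp: z0_def)
    have c6: "card {x\<in>?A. x 0 \<noteq> 0 \<or> x 1 \<noteq> 0} = 2^(N+1) - 2^(N-1)"
      unfolding e2 using fin vecs_card[OF gf2] count_x01[OF gf2 assms]
      by (subst card_Diff_subset) auto
    have "ev 0 \<in> ?A" "ev 1 \<in> ?A" using assms ev_vecs ev_nz by auto
    then show ?thesis using cA c4 c6 by simp
  qed
  finally show ?thesis .
qed

end


lemma lc3_vals: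
  "lc3 a b c 0 0 0 = z0" "lc3 a b c 1 0 0 = a" "lc3 a b c 0 1 0 = b" "lc3 a b c 0 0 1 = c"
  "lc3 a b c 1 1 0 = vadd a b" "lc3 a b c 1 0 1 = vadd a c" "lc3 a b c 0 1 1 = vadd b c"
  "lc3 a b c 1 1 1 = vadd (vadd a b) c"
  by (simp_all add: lc3_def vadd_def z0_def)

lemma inj_lc3:
  assumes "ind3 a b c"
  shows "inj (\<lambda>(x,y,z). lc3 a b c x y z)"
proof -
  have key: "x = x' \<and> y = y' \<and> z = z'" if h: "lc3 a b c x y z = lc3 a b c x' y' z'" for x y z x' y' z'
  proof -
    have "lc3 a b c (x - x') (y - y') (z - z') = z0"
    proof
      fix i
      have "x * a i + y * b i + z * c i = x' * a i + y' * b i + z' * c i"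
        using h unfolding lc3_def by meson
      then show "lc3 a b c (x - x') (y - y') (z - z') i = z0 i"
        unfolding lc3_def z0_def by (simp add: algebra_simps)
    qed
    then show "x = x' \<and> y = y' \<and> z = z'" using assms unfolding ind3_def by fastforce
  qed
  show ?thesis by (rule inj_onI) (use key in auto)
qed

lemma sum_invol:
  assumes "\<And>x. x \<in> A \<Longrightarrow> h x \<in> A" "\<And>x. h (h x) = x"
  shows "(\<Sum>x\<in>A. f (h x)) = (\<Sum>x\<in>A. f x)"
proof -
  have inj: "inj_on h A" by (rule inj_onI) (metis assms(2))
  have img: "h ` A = A"
  proof
    show "h ` A \<subseteq> A" using assms(1) by blast
    show "A \<subseteq> h ` A"
    proof
      fix x assume "x \<in> A"
      then have "h x \<in> A" "x = h (h x)" using assms by auto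
      then show "x \<in> h ` A" by blast
    qed
  qed
  have "(\<Sum>x\<in>A. f x) = (\<Sum>x\<in>h ` A. f x)" using img by simp
  also have "\<dots> = (\<Sum>x\<in>A. f (h x))" using sum.reindex[OF inj, of f] by simp
  finally show ?thesis by simp
qed

context
  fixes TYA :: "'a::{finite,field} itself"
  assumes gf2: "card (UNIV :: 'a set) = 2"
begin

lemma ind3_of:
  assumes "a \<noteq> z0" "b \<noteq> z0" "b \<noteq> a" "c \<noteq> z0" "c \<noteq> a" "c \<noteq> b" "c \<noteq> vadd a (b :: nat \<Rightarrow> 'a)"
  shows "ind3 a b c"
  unfolding ind3_def
proof (intro allI impI)
  fix x y z :: 'a
  assume h: "lc3 a b c x y z = z0"
  have nz: "vadd a b \<noteq> z0" "vadd a c \<noteq> z0" "vadd b c \<noteq> z0" "vadd (vadd a b) c \<noteq> z0"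
  proof -
    have e: "\<And>u v. (vadd u v = z0) = (u = (v :: nat \<Rightarrow> 'a))" using vadd_eq_z0[OF gf2] by blast
    show "vadd a b \<noteq> z0" unfolding e using assms(3) by blast
    show "vadd a c \<noteq> z0" unfolding e using assms(5) by blast
    show "vadd b c \<noteq> z0" unfolding e using assms(6) by blast
    show "vadd (vadd a b) c \<noteq> z0" unfolding e using assms(7) by blast
  qed
  show "x = 0 \<and> y = 0 \<and> z = 0"
    using gf2_cases[OF gf2, of x] gf2_cases[OF gf2, of y] gf2_cases[OF gf2, of z] h
    by (elim disjE) (simp_all add: lc3_vals nz assms)
qed

lemma univ3: "(UNIV :: ('a \<times> 'a \<times> 'a) set) - {(0,0,0)} =
   {(1,0,0),(0,1,0),(0,0,1),(1,1,0),(1,0,1),(0,1,1),(1,1,1)}"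
proof
  show "(UNIV :: ('a \<times> 'a \<times> 'a) set) - {(0,0,0)} \<subseteq> {(1,0,0),(0,1,0),(0,0,1),(1,1,0),(1,0,1),(0,1,1),(1,1,1)}"
  proof
    fix t :: "'a \<times> 'a \<times> 'a"
    assume t: "t \<in> UNIV - {(0,0,0)}"
    obtain x y z where xyz: "t = (x,y,z)" by (cases t) auto
    show "t \<in> {(1,0,0),(0,1,0),(0,0,1),(1,1,0),(1,0,1),(0,1,1),(1,1,1)}"
      using gf2_cases[OF gf2, of x] gf2_cases[OF gf2, of y] gf2_cases[OF gf2, of z] t unfolding xyz
      by (elim disjE) simp_all
  qed
qed auto

lemma plane_sum:
  assumes abc: "a \<in> vecs N" "b \<in> vecs N" "c \<in> vecs N" "ind3 a b (c :: nat \<Rightarrow> 'a)"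
  shows "mult_of N K (span3 a b c) = K {z0, a} + K {z0, b} + K {z0, c} + K {z0, vadd a b}
     + K {z0, vadd a c} + K {z0, vadd b c} + K {z0, vadd (vadd a b) c}"
proof -
  let ?S = "span3 a b c"
  let ?f = "\<lambda>(x,y,z). lc3 a b c x y z"
  have Ssub: "?S \<subseteq> vecs N" using span3_vecs abc by blast
  have z: "z0 \<in> ?S" using z0_span3 by blast
  have inj: "inj ?f" using inj_lc3[OF abc(4)] .
  have "?S - {z0} = ?f ` (UNIV - {(0,0,0)})"
  proof -
    have "?S = ?f ` UNIV" using span3_img[OF gf2] .
    moreover have "?f (0,0,0) = z0" by (simp add: lc3_vals)
    ultimately show ?thesis using inj by (simp add: image_set_diff)
  qed
  then have eq: "(?S \<inter> vecs N) - {z0} = ?f ` (UNIV - {(0,0,0)})" using Ssub by blast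
  have "mult_of N K ?S = (\<Sum>x\<in>?f ` (UNIV - {(0,0,0)}). K {z0, x})"
    using mult_of_eq[OF gf2 z] eq by simp
  also have "\<dots> = (\<Sum>t\<in>UNIV - {(0,0,0)}. K {z0, ?f t})"
    using inj by (simp add: sum.reindex inj_on_subset)
  also have "\<dots> = K {z0, a} + K {z0, b} + K {z0, c} + K {z0, vadd a b}
     + K {z0, vadd a c} + K {z0, vadd b c} + K {z0, vadd (vadd a b) c}"
    unfolding univ3 by (simp add: lc3_vals add.assoc)
  finally show ?thesis .
qed

end


context
  fixes TYA :: "'a::{finite,field} itself"
  assumes gf2: "card (UNIV :: 'a set) = 2"
begin

lemma plane_ok:
  assumes "p \<in> vecs N" "q \<in> vecs N" "y \<in> vecs N" "p \<noteq> z0" "q \<noteq> z0" "q \<noteq> p" "y \<noteq> z0" "y \<noteq> p" "y \<noteq> q"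
    "y \<noteq> vadd p (q :: nat \<Rightarrow> 'a)"
    and valid: "\<forall>S \<in> (proj_subspaces N 2 :: (nat \<Rightarrow> 'a) set set). mult_of N K S \<le> w"
  shows "K {z0, p} + K {z0, q} + K {z0, y} + K {z0, vadd p q} + K {z0, vadd p y} + K {z0, vadd q y}
     + K {z0, vadd (vadd p q) y} \<le> w"
proof -
  have ind: "ind3 p q y" using ind3_of[OF gf2] assms(4-10) by blast
  have "lin_subspace_dim N 3 (span3 p q y)" unfolding plane_char using assms ind by blast
  then have "span3 p q y \<in> (proj_subspaces N 2 :: (nat \<Rightarrow> 'a) set set)"
    unfolding proj_subspaces_def by (simp add: numeral_3_eq_3)
  then have "mult_of N K (span3 p q y) \<le> w" using valid by blast
  then show ?thesis using plane_sum[OF gf2 assms(1-3) ind] by simp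
qed

lemma geo:
  assumes N: "N \<ge> 2"
    and valid: "\<forall>S \<in> (proj_subspaces N 2 :: (nat \<Rightarrow> 'a) set set). mult_of N K S \<le> w"
  shows "\<exists>l p0 :: int. 4 * (int (ms_card N K) - l) \<le> (2^(N+1) - 4) * (int w - l)
     \<and> 2 * (int (ms_card N K) - p0) \<le> (2^(N+1) - 2) * (l - p0)
     \<and> int (ms_card N K) \<le> (2^(N+1) - 1) * p0"
proof -
  let ?V = "vecs N :: (nat \<Rightarrow> 'a) set"
  let ?A = "?V - {z0}"
  define g where "g x = K {z0, x}" for x :: "nat \<Rightarrow> 'a"
  define n where "n = ms_card N K"
  have n_eq: "n = (\<Sum>x\<in>?A. g x)" unfolding n_def g_def using ms_card_eq[OF gf2] by simp
  have finV: "finite ?V" using vecs_fin[OF gf2] .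
  have finA: "finite ?A" using finV by simp
  have "card ?A = card ?V - 1" by (rule card_Diff_singleton) (rule z0_vecs)
  then have cardA: "card ?A = 2^(N+1) - 1" using vecs_card[OF gf2, of N] by simp
  have pos: "(4::nat) \<le> 2^(N+1)"
  proof -
    have "(2::nat)^2 \<le> 2^(N+1)" using N by (intro power_increasing) auto
    then show ?thesis by simp
  qed
  have "ev 0 \<in> ?V" "ev 1 \<in> ?V" using N by (auto intro!: ev_vecs)
  then have e0: "ev 0 \<in> ?A" "ev 1 \<in> ?A" using ev_nz by auto
  have e01: "ev 0 \<noteq> (ev 1 :: nat \<Rightarrow> 'a)" by (auto simp: ev_def fun_eq_iff)
  have pl: "g p + g q + g y + g (vadd p q) + g (vadd p y) + g (vadd q y) + g (vadd (vadd p q) y) \<le> w"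
    if "p \<in> ?V" "q \<in> ?V" "y \<in> ?V" "p \<noteq> z0" "q \<noteq> z0" "q \<noteq> p" "y \<noteq> z0" "y \<noteq> p" "y \<noteq> q"
    "y \<noteq> vadd p q" for p q y
    unfolding g_def using plane_ok[OF that valid] .
  have ve: "\<And>u v. (vadd u v = z0) = (u = (v :: nat \<Rightarrow> 'a))" using vadd_eq_z0[OF gf2] by blast
  have vs: "\<And>u v. (vadd u v = u) = (v = (z0 :: nat \<Rightarrow> 'a))" "\<And>u v. (vadd v u = u) = (v = (z0 :: nat \<Rightarrow> 'a))"
    using vadd_eq_self[OF gf2] by blast+
  have neA: "?A \<noteq> {}" using e0 by blast
  have "Max (g ` ?A) \<in> g ` ?A" using finA neA by simp
  then obtain p where p0: "Max (g ` ?A) = g p" "p \<in> ?A" by (rule imageE)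
  then have p: "p \<in> ?A" "g p = Max (g ` ?A)" by simp_all
  have pmax: "\<And>x. x \<in> ?A \<Longrightarrow> g x \<le> g p" using p finA by simp
  have iii: "n \<le> card ?A * g p" unfolding n_eq using sum_bounded_above[of ?A g "g p"] pmax by simp
  \<comment> \<open>step (ii): lines through p\<close>
  let ?A1 = "?A - {p}"
  define L where "L x = g x + g (vadd p x)" for x
  have finA1: "finite ?A1" using finA by simp
  have neA1: "?A1 \<noteq> {}" using e0 e01 by blast
  have "Max (L ` ?A1) \<in> L ` ?A1" using finA1 neA1 by simp
  then obtain q where q0: "Max (L ` ?A1) = L q" "q \<in> ?A1" by (rule imageE)
  then have q: "q \<in> ?A1" "L q = Max (L ` ?A1)" by simp_all
  have qmax: "\<And>x. x \<in> ?A1 \<Longrightarrow> L x \<le> L q" using q finA1 by simp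
  have cl1: "vadd p x \<in> ?A1" if "x \<in> ?A1" for x
    using that p vadd_vecs ve vs by auto
  have s1: "(\<Sum>x\<in>?A1. g (vadd p x)) = (\<Sum>x\<in>?A1. g x)"
    by (rule sum_invol) (use cl1 vadd_cancel(3)[OF gf2] in auto)
  have s2: "(\<Sum>x\<in>?A1. L x) = 2 * (\<Sum>x\<in>?A1. g x)" unfolding L_def sum.distrib s1 by simp
  have s3: "n = g p + (\<Sum>x\<in>?A1. g x)" unfolding n_eq using finA p(1) by (simp add: sum.remove)
  have cardA1: "card ?A1 = 2^(N+1) - 2" using cardA p finA by simp
  have ii0: "(\<Sum>x\<in>?A1. L x) \<le> card ?A1 * L q" using sum_bounded_above[of ?A1 L "L q"] qmax by simp
  \<comment> \<open>step (i): planes through the line {p, q, p+q}\<close>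
  define pq where "pq = vadd p q"
  have pA: "p \<in> ?V" "p \<noteq> z0" using p by auto
  have qA: "q \<in> ?V" "q \<noteq> z0" "q \<noteq> p" using q by auto
  have pqV: "pq \<in> ?V" unfolding pq_def using pA qA vadd_vecs by blast
  have pqd: "pq \<noteq> z0" "pq \<noteq> p" "pq \<noteq> q" unfolding pq_def using pA qA ve vs by metis+
  let ?L0 = "{z0, p, q, pq}"
  let ?R = "?V - ?L0"
  have finR: "finite ?R" using finV by simp
  have cardL0: "card ?L0 = 4" using pA qA pqd by auto
  have cardR: "card ?R = 2^(N+1) - 4"
    using vecs_card[OF gf2] finV cardL0 pA qA pqV z0_vecs by (subst card_Diff_subset) auto
  have L0cl: "vadd c u \<in> ?L0" if "c \<in> {p, q, pq}" "u \<in> ?L0" for c u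
  proof -
    have "vadd p pq = q" "vadd q pq = p" "vadd pq p = q" "vadd pq q = p" "vadd q p = pq"
      unfolding pq_def using vadd_cancel[OF gf2] vadd_comm by metis+
    then show ?thesis using that vadd_self[OF gf2] pq_def by auto
  qed
  have Rcl: "vadd c y \<in> ?R" if c: "c \<in> {p, q, pq}" and y: "y \<in> ?R" for c y
  proof -
    have cV: "c \<in> ?V" using c pA qA pqV by auto
    have "vadd c y \<notin> ?L0"
    proof
      assume "vadd c y \<in> ?L0"
      then have "vadd c (vadd c y) \<in> ?L0" using L0cl c by blast
      then show False using y vadd_cancel(3)[OF gf2] by simp
    qed
    then show ?thesis using y cV vadd_vecs by blast
  qed
  define M where "M y = g y + g (vadd p y) + g (vadd q y) + g (vadd pq y)" for y
  have sR: "(\<Sum>y\<in>?R. M y) = 4 * (\<Sum>y\<in>?R. g y)"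
  proof -
    have a: "(\<Sum>y\<in>?R. g (vadd c y)) = (\<Sum>y\<in>?R. g y)" if "c \<in> {p, q, pq}" for c
      by (rule sum_invol) (use Rcl[OF that] vadd_cancel(3)[OF gf2] in auto)
    show ?thesis unfolding M_def sum.distrib using a by simp
  qed
  have sA: "n = g p + g q + g pq + (\<Sum>y\<in>?R. g y)"
  proof -
    have sub: "{p, q, pq} \<subseteq> ?A" using pA qA pqV pqd by auto
    have "n = (\<Sum>y\<in>?A - {p, q, pq}. g y) + (\<Sum>y\<in>{p, q, pq}. g y)"
      unfolding n_eq using sum.subset_diff[OF sub finA] .
    moreover have "?A - {p, q, pq} = ?R" by auto
    moreover have "(\<Sum>y\<in>{p, q, pq}. g y) = g p + g q + g pq" using qA pqd by simp
    ultimately show ?thesis by simp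
  qed
  define l where "l = g p + g q + g pq"
  have Mb: "l + M y \<le> w" if y: "y \<in> ?R" for y
  proof -
    have "g p + g q + g y + g (vadd p q) + g (vadd p y) + g (vadd q y) + g (vadd (vadd p q) y) \<le> w"
      using y pA qA by (intro pl) (auto simp: pq_def)
    then show ?thesis unfolding l_def M_def pq_def by simp
  qed
  have i0: "int (\<Sum>y\<in>?R. M y) \<le> int (card ?R) * (int w - int l)"
  proof -
    have "int (\<Sum>y\<in>?R. M y) = (\<Sum>y\<in>?R. int (M y))" by simp
    also have "\<dots> \<le> (\<Sum>y\<in>?R. (int w - int l))" using Mb by (intro sum_mono) force
    also have "\<dots> = int (card ?R) * (int w - int l)" by simp
    finally show ?thesis .
  qed
  have lq: "l = g p + L q" unfolding l_def L_def pq_def by simp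
  show ?thesis
  proof (intro exI conjI)
    show "4 * (int (ms_card N K) - int l) \<le> (2^(N+1) - 4) * (int w - int l)"
      using i0 sR sA cardR pos unfolding n_def[symmetric] l_def by (simp add: of_nat_diff)
    show "2 * (int (ms_card N K) - int (g p)) \<le> (2^(N+1) - 2) * (int l - int (g p))"
    proof -
      define sa where "sa = (\<Sum>x\<in>?A1. g x)"
      have h1: "2 * sa \<le> (2^(N+1) - 2) * L q" using ii0 s2 cardA1 unfolding sa_def by simp
      have h2: "n = g p + sa" using s3 unfolding sa_def .
      have "int (2 * sa) \<le> int ((2^(N+1) - 2) * L q)" using h1 by (simp only: of_nat_le_iff)
      then have "2 * int sa \<le> (2^(N+1) - 2) * int (L q)" using pos by (simp add: of_nat_diff)
      then show ?thesis unfolding n_def[symmetric] h2 lq by simp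
    qed
    show "int (ms_card N K) \<le> (2^(N+1) - 1) * int (g p)"
    proof -
      have "n \<le> (2^(N+1) - 1) * g p" using iii cardA by simp
      then have "int n \<le> int ((2^(N+1) - 1) * g p)" by (simp only: of_nat_le_iff)
      then show ?thesis using pos unfolding n_def[symmetric] by (simp add: of_nat_diff)
    qed
  qed
qed

end


definition TT :: "int \<Rightarrow> int \<Rightarrow> int" where
  "TT v d = \<lceil>real_of_int d / (2 * real_of_int v)\<rceil> + \<lceil>real_of_int d / (4 * real_of_int v)\<rceil>
     + \<lceil>real_of_int d / (8 * real_of_int v)\<rceil>"

lemma gg_eq:
  assumes "s \<ge> 1"
  shows "griesmer_g 2 s (s + 3) d = d + TT (2^s - 1) d"
proof -
  have vq: "vq 2 s = 2^s - 1" by (simp add: vq_def)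
  have "(\<Sum>i = 1..3. \<lceil>real_of_int d / (real 2 ^ i * real_of_int (vq 2 s))\<rceil>)
      = \<lceil>real_of_int d / (2 * real_of_int (vq 2 s))\<rceil> + \<lceil>real_of_int d / (4 * real_of_int (vq 2 s))\<rceil>
        + \<lceil>real_of_int d / (8 * real_of_int (vq 2 s))\<rceil>"
    by (simp add: eval_nat_numeral atLeastAtMostSuc_conv)
  then show ?thesis unfolding griesmer_g_def TT_def vq by simp
qed

lemma cU:
  assumes "v > 0" "d \<le> m * (c * v)" "c > 0"
  shows "\<lceil>real_of_int d / (real_of_int c * real_of_int v)\<rceil> \<le> m"
proof -
  have "real_of_int d \<le> real_of_int m * (real_of_int c * real_of_int v)"
    using assms(2) by (metis of_int_le_iff of_int_mult)
  then have "real_of_int d / (real_of_int c * real_of_int v) \<le> real_of_int m"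
    using assms by (simp add: divide_le_eq)
  then show ?thesis by (simp add: ceiling_le_iff)
qed

lemma cL:
  assumes "v > 0" "d > (m - 1) * (c * v)" "c > 0"
  shows "\<lceil>real_of_int d / (real_of_int c * real_of_int v)\<rceil> \<ge> m"
proof -
  have "real_of_int d > real_of_int (m - 1) * (real_of_int c * real_of_int v)"
    using assms(2) by (metis of_int_less_iff of_int_mult)
  then have "real_of_int d / (real_of_int c * real_of_int v) > real_of_int (m - 1)"
    using assms by (simp add: less_divide_eq)
  then have "m - 1 < \<lceil>real_of_int d / (real_of_int c * real_of_int v)\<rceil>" by (simp add: less_ceiling_iff)
  then show ?thesis by simp
qed

lemma TT_upper:
  assumes v: "v > 0" and "d \<le> a * (2 * v)" "d \<le> b * (4 * v)" "d \<le> c * (8 * v)"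
  shows "TT v d \<le> a + b + c"
proof -
  have "\<lceil>real_of_int d / (2 * real_of_int v)\<rceil> \<le> a" using cU[of v d a 2] assms by simp
  moreover have "\<lceil>real_of_int d / (4 * real_of_int v)\<rceil> \<le> b" using cU[of v d b 4] assms by simp
  moreover have "\<lceil>real_of_int d / (8 * real_of_int v)\<rceil> \<le> c" using cU[of v d c 8] assms by simp
  ultimately show ?thesis unfolding TT_def by simp
qed

lemma TT_lower:
  assumes v: "v > 0" and "d > (a - 1) * (2 * v)" "d > (b - 1) * (4 * v)" "d > (c - 1) * (8 * v)"
  shows "TT v d \<ge> a + b + c"
proof -
  have "\<lceil>real_of_int d / (2 * real_of_int v)\<rceil> \<ge> a" using cL[of v a 2 d] assms by simp
  moreover have "\<lceil>real_of_int d / (4 * real_of_int v)\<rceil> \<ge> b" using cL[of v b 4 d] assms by simp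
  moreover have "\<lceil>real_of_int d / (8 * real_of_int v)\<rceil> \<ge> c" using cL[of v c 8 d] assms by simp
  ultimately show ?thesis unfolding TT_def by simp
qed

lemma TT_from_geo:
  fixes n w l p0 v :: int
  assumes v: "v \<ge> 1"
    and i: "4 * (n - l) \<le> (8 * v + 4) * (w - l)"
    and ii: "2 * (n - p0) \<le> (8 * v + 6) * (l - p0)"
    and iii: "n \<le> (8 * v + 7) * p0"
  shows "TT v (n - w) \<le> w"
proof -
  define x y z D where "x = w - l" and "y = l - p0" and "z = p0" and "D = n - w"
  have i': "D \<le> x * (2 * v)" using i unfolding x_def D_def by (simp add: algebra_simps)
  have ii': "D + x \<le> (4 * v + 2) * y" using ii unfolding x_def y_def D_def by (simp add: algebra_simps)
  have iii': "D + x + y \<le> (8 * v + 6) * z" using iii unfolding x_def y_def z_def D_def by (simp add: algebra_simps)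
  have y': "D \<le> y * (4 * v)"
  proof -
    have "(4 * v + 2) * D \<le> 4 * v * (D + x)" using i' by (simp add: algebra_simps)
    also have "\<dots> \<le> 4 * v * ((4 * v + 2) * y)" using ii' v by (intro mult_left_mono) auto
    also have "\<dots> = (4 * v + 2) * (y * (4 * v))" by (simp add: algebra_simps)
    finally show ?thesis using v by (simp add: mult_le_cancel_left)
  qed
  have z': "D \<le> z * (8 * v)"
  proof -
    have "(8 * v + 6) * D \<le> 8 * v * (D + x + y)" using i' y' by (simp add: algebra_simps)
    also have "\<dots> \<le> 8 * v * ((8 * v + 6) * z)" using iii' v by (intro mult_left_mono) auto
    also have "\<dots> = (8 * v + 6) * (z * (8 * v))" by (simp add: algebra_simps)
    finally show ?thesis using v by (simp add: mult_le_cancel_left)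
  qed
  have "TT v D \<le> x + y + z" using TT_upper[of v D x y z] v i' y' z' by simp
  then show ?thesis unfolding D_def x_def y_def z_def by simp
qed

lemma TT_mono:
  assumes "v > 0" "d \<le> d'"
  shows "TT v d \<le> TT v d'"
proof -
  have h: "\<lceil>real_of_int d / (c * real_of_int v)\<rceil> \<le> \<lceil>real_of_int d' / (c * real_of_int v)\<rceil>" if "c > 0" for c :: real
    using assms that by (intro ceiling_mono divide_right_mono) auto
  show ?thesis unfolding TT_def using h[of 2] h[of 4] h[of 8] by simp
qed

lemma upper_case:
  fixes v t c a0 b0 c0 w0 :: int
  assumes v: "v \<ge> 1" and t: "t \<ge> 0" and h: "c \<le> 2 * a0" "c \<le> 4 * b0" "c \<le> 8 * c0" "a0 + b0 + c0 \<le> w0"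
  shows "TT v (8 * v * t + c * v) \<le> 7 * t + w0"
proof -
  have "c * v \<le> (2 * a0) * v" "c * v \<le> (4 * b0) * v" "c * v \<le> (8 * c0) * v"
    using h v by (intro mult_right_mono; simp)+
  then have "8 * v * t + c * v \<le> (4 * t + a0) * (2 * v)" "8 * v * t + c * v \<le> (2 * t + b0) * (4 * v)"
    "8 * v * t + c * v \<le> (t + c0) * (8 * v)" by (simp_all add: algebra_simps)
  then have "TT v (8 * v * t + c * v) \<le> (4 * t + a0) + (2 * t + b0) + (t + c0)"
    using v by (intro TT_upper) auto
  then show ?thesis using h by simp
qed

lemma lower_case:
  fixes v t c a0 b0 c0 w0 :: int
  assumes v: "v \<ge> 1" and t: "t \<ge> 0" and h: "2 * (a0 - 1) \<le> c" "4 * (b0 - 1) \<le> c" "8 * (c0 - 1) \<le> c"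
    "a0 + b0 + c0 > w0"
  shows "TT v (8 * v * t + c * v + 1) > 7 * t + w0"
proof -
  have "(2 * (a0 - 1)) * v \<le> c * v" "(4 * (b0 - 1)) * v \<le> c * v" "(8 * (c0 - 1)) * v \<le> c * v"
    using h v by (intro mult_right_mono; simp)+
  then have "8 * v * t + c * v + 1 > (4 * t + a0 - 1) * (2 * v)" "8 * v * t + c * v + 1 > (2 * t + b0 - 1) * (4 * v)"
    "8 * v * t + c * v + 1 > (t + c0 - 1) * (8 * v)" by (simp_all add: algebra_simps)
  then have "TT v (8 * v * t + c * v + 1) \<ge> (4 * t + a0) + (2 * t + b0) + (t + c0)"
    using v by (intro TT_lower) (auto simp: algebra_simps)
  then show ?thesis using h by simp
qed

lemma key_arith:
  fixes v t w0 c :: int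
  assumes v: "v \<ge> 1" and t: "t \<ge> 0"
    and wc: "(w0, c) \<in> {(4,4),(5,4),(6,6),(7,8),(8,8),(9,8),(10,10)}"
  shows "TT v (t * (8 * v + 7) + c * v + w0 - (7 * t + w0)) \<le> 7 * t + w0"
    and "\<And>n. n > t * (8 * v + 7) + c * v + w0 \<Longrightarrow> TT v (n - (7 * t + w0)) > 7 * t + w0"
proof -
  have D: "t * (8 * v + 7) + c * v + w0 - (7 * t + w0) = 8 * v * t + c * v" by (simp add: algebra_simps)
  have up: "TT v (8 * v * t + c * v) \<le> 7 * t + w0"
    using wc upper_case[OF v t, of c 2 1 1 w0] upper_case[OF v t, of c 3 2 1 w0]
      upper_case[OF v t, of c 4 2 1 w0] upper_case[OF v t, of c 5 3 2 w0] by auto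
  then show "TT v (t * (8 * v + 7) + c * v + w0 - (7 * t + w0)) \<le> 7 * t + w0" unfolding D .
  have lo: "TT v (8 * v * t + c * v + 1) > 7 * t + w0"
    using wc lower_case[OF v t, of 3 c 2 1 w0] lower_case[OF v t, of 4 c 2 1 w0]
      lower_case[OF v t, of 5 c 3 2 w0] lower_case[OF v t, of 6 c 3 2 w0] by auto
  fix n assume nB: "n > t * (8 * v + 7) + c * v + w0"
  have "TT v (8 * v * t + c * v + 1) \<le> TT v (n - (7 * t + w0))" using nB v
    by (intro TT_mono) (auto simp: algebra_simps)
  then show "TT v (n - (7 * t + w0)) > 7 * t + w0" using lo by simp
qed



definition cfun :: "nat \<Rightarrow> int" where
  "cfun w0 = (if w0 \<le> 5 then 4 else if w0 = 6 then 6 else if w0 \<le> 9 then 8 else 10)"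

lemma cfun_mem: "4 \<le> w0 \<Longrightarrow> w0 \<le> 10 \<Longrightarrow> (int w0, cfun w0) \<in> {(4,4),(5,4),(6,6),(7,8),(8,8),(9,8),(10,10)}"
  unfolding cfun_def by (cases "w0 = 4 \<or> w0 = 5 \<or> w0 = 6 \<or> w0 = 7 \<or> w0 = 8 \<or> w0 = 9 \<or> w0 = 10") auto

context
  fixes TYA :: "'a::{finite,field} itself"
  assumes gf2: "card (UNIV :: 'a set) = 2"
begin

lemma constr_exists:
  assumes "7 * a1 + 4 * a4 + 6 * a6 + d0 + d1 \<le> w" and "N = s + 2"
  shows "\<exists>K :: (nat \<Rightarrow> 'a) set \<Rightarrow> nat. ms_card N K = a1 * (8 * 2^s - 1) + a4 * (4 * 2^s) + a6 * (6 * 2^s) + d0 + d1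
     \<and> (\<forall>S \<in> proj_subspaces N 2. mult_of N K S \<le> w)"
proof (intro exI conjI)
  show "ms_card N (Kc a1 a4 a6 d0 d1 :: (nat \<Rightarrow> 'a) set \<Rightarrow> nat) = a1 * (8 * 2^s - 1) + a4 * (4 * 2^s) + a6 * (6 * 2^s) + d0 + d1"
  proof -
    have "ms_card N (Kc a1 a4 a6 d0 d1 :: (nat \<Rightarrow> 'a) set \<Rightarrow> nat)
       = a1 * (2^(N+1) - 1) + a4 * 2^N + a6 * (2^(N+1) - 2^(N-1)) + d0 + d1"
      using constr_card[OF gf2] assms(2) by simp
    moreover have "(2::nat)^(N+1) = 8 * 2^s" "(2::nat)^N = 4 * 2^s" "(2::nat)^(N-1) = 2 * 2^s"
      using assms(2) by (simp_all add: power_add)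
    ultimately show ?thesis by simp
  qed
  show "\<forall>S \<in> proj_subspaces N 2. mult_of N (Kc a1 a4 a6 d0 d1 :: (nat \<Rightarrow> 'a) set \<Rightarrow> nat) S \<le> w"
    using constr_plane[OF gf2] assms(1) le_trans by blast
qed

lemma lower_exists:
  assumes w: "w = 7 * t + w0" "4 \<le> w0" "w0 \<le> 10" and N: "N = s + 2"
  shows "\<exists>K :: (nat \<Rightarrow> 'a) set \<Rightarrow> nat. int (ms_card N K) = int t * (8 * (2^s - 1) + 7) + cfun w0 * (2^s - 1) + int w0
     \<and> (\<forall>S \<in> proj_subspaces N 2. mult_of N K S \<le> w)"
proof -
  define P :: nat where "P = 2^s"
  have P1: "P \<ge> 1" unfolding P_def by simp
  have iP: "(2::int)^s = int P" unfolding P_def by simp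
  have e: "int (a1 * (8 * P - 1) + a4 * (4 * P) + a6 * (6 * P) + d0 + d1)
       = int a1 * (8 * int P - 1) + int a4 * (4 * int P) + int a6 * (6 * int P) + int d0 + int d1"
    for a1 a4 a6 d0 d1 using P1 by (simp add: of_nat_diff)
  have ex: "\<exists>K :: (nat \<Rightarrow> 'a) set \<Rightarrow> nat. int (ms_card N K) = int a1 * (8 * int P - 1) + int a4 * (4 * int P) + int a6 * (6 * int P) + int d0 + int d1
     \<and> (\<forall>S \<in> proj_subspaces N 2. mult_of N K S \<le> w)" if "7 * a1 + 4 * a4 + 6 * a6 + d0 + d1 \<le> w" for a1 a4 a6 d0 d1
    using constr_exists[OF that N] e unfolding P_def by metis
  consider "w0 = 4" | "w0 = 5" | "w0 = 6" | "w0 = 7" | "w0 = 8" | "w0 = 9" | "w0 = 10" using w by linarith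
  then show ?thesis
  proof cases
    case 1 then show ?thesis using ex[of t 1 0 0 0] w unfolding iP by (simp add: cfun_def algebra_simps)
  next
    case 2 then show ?thesis using ex[of t 1 0 0 1] w unfolding iP by (simp add: cfun_def algebra_simps)
  next
    case 3 then show ?thesis using ex[of t 0 1 0 0] w unfolding iP by (simp add: cfun_def algebra_simps)
  next
    case 4 then show ?thesis using ex[of "t+1" 0 0 0 0] w unfolding iP by (simp add: cfun_def algebra_simps)
  next
    case 5 then show ?thesis using ex[of "t+1" 0 0 1 0] w unfolding iP by (simp add: cfun_def algebra_simps)
  next
    case 6 then show ?thesis using ex[of "t+1" 0 0 1 1] w unfolding iP by (simp add: cfun_def algebra_simps)
  next
    case 7 then show ?thesis using ex[of t 1 1 0 0] w unfolding iP by (simp add: cfun_def algebra_simps)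
  qed
qed

end



theorem mainTheorem6:
  fixes k w :: nat
  assumes "card (UNIV :: 'a set) = 2"
    and "k \<ge> 4" and "w \<ge> 4"
  shows "int (m_max TYPE('a::{finite,field}) 2 (k - 1) w) = griesmer_bound 2 2 (k - 1) w"
proof -
  note gf2 = assms(1)
  define s where "s = k - 3"
  have s1: "s \<ge> 1" using assms(2) unfolding s_def by simp
  have N: "k - 1 = s + 2" using assms(2) unfolding s_def by simp
  have N1: "k - 1 + 1 = s + 3" "k - 1 - 2 = s" using assms(2) unfolding s_def by simp_all
  define t where "t = (w - 4) div 7"
  define w0 where "w0 = (w - 4) mod 7 + 4"
  have w: "w = 7 * t + w0" "4 \<le> w0" "w0 \<le> 10" using assms(3) unfolding t_def w0_def by auto
  define v :: int where "v = 2^s - 1"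
  have "(2::int)^1 \<le> 2^s" using s1 by (intro power_increasing) auto
  then have v1: "v \<ge> 1" unfolding v_def by simp
  have p8: "(2::int)^(k - 1 + 1) = 8 * v + 8" unfolding N1 v_def by (simp add: power_add)
  define B where "B = int t * (8 * v + 7) + cfun w0 * v + int w0"
  have iw: "int w = 7 * int t + int w0" using w by simp
  have ka1: "TT v (B - int w) \<le> int w"
    using key_arith(1)[OF v1 _ cfun_mem[OF w(2,3)], of "int t"] unfolding B_def iw by simp
  have ka2: "TT v (n - int w) > int w" if "n > B" for n
    using key_arith(2)[OF v1 _ cfun_mem[OF w(2,3)], of "int t" n] that unfolding B_def iw by simp
  have B0: "B \<ge> 0" unfolding B_def using v1 w by (simp add: cfun_def)
  have GB: "griesmer_bound 2 2 (k - 1) w = B"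
  proof -
    have cond: "(n \<ge> griesmer_g 2 (k - 1 - 2) (k - 1 + 1) (n - int w)) = (TT v (n - int w) \<le> int w)" for n
      unfolding N1 gg_eq[OF s1] v_def by simp
    show ?thesis unfolding griesmer_bound_def cond
    proof (rule Greatest_equality)
      show "TT v (B - int w) \<le> int w" by (rule ka1)
      show "y \<le> B" if "TT v (y - int w) \<le> int w" for y
        using ka2[of y] that by fastforce
    qed
  qed
  have MM: "m_max TYPE('a) 2 (k - 1) w = nat B"
    unfolding m_max_def
  proof (rule Greatest_equality)
    obtain K :: "(nat \<Rightarrow> 'a) set \<Rightarrow> nat" where K: "int (ms_card (k - 1) K) = B"
      "\<forall>S \<in> proj_subspaces (k - 1) 2. mult_of (k - 1) K S \<le> w"
      using lower_exists[OF gf2 w N] unfolding B_def v_def by auto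
    then show "\<exists>K :: (nat \<Rightarrow> 'a) set \<Rightarrow> nat. ms_card (k - 1) K = nat B \<and> (\<forall>S \<in> proj_subspaces (k - 1) 2. mult_of (k - 1) K S \<le> w)"
      by (intro exI[of _ K]) auto
  next
    fix y
    assume "\<exists>K :: (nat \<Rightarrow> 'a) set \<Rightarrow> nat. ms_card (k - 1) K = y \<and> (\<forall>S \<in> proj_subspaces (k - 1) 2. mult_of (k - 1) K S \<le> w)"
    then obtain K :: "(nat \<Rightarrow> 'a) set \<Rightarrow> nat" where K: "ms_card (k - 1) K = y"
      "\<forall>S \<in> proj_subspaces (k - 1) 2. mult_of (k - 1) K S \<le> w" by blast
    have N2: "k - 1 \<ge> 2" using assms(2) by simp
    obtain l p0 :: int where
      g1: "4 * (int (ms_card (k - 1) K) - l) \<le> (2^(k - 1 + 1) - 4) * (int w - l)" and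
      g2: "2 * (int (ms_card (k - 1) K) - p0) \<le> (2^(k - 1 + 1) - 2) * (l - p0)" and
      g3: "int (ms_card (k - 1) K) \<le> (2^(k - 1 + 1) - 1) * p0"
      using geo[OF gf2 N2 K(2)] by blast
    have "TT v (int y - int w) \<le> int w"
      using TT_from_geo[OF v1, of "int y" l "int w" p0] g1 g2 g3 unfolding p8 K(1) by (simp add: algebra_simps)
    then have "int y \<le> B" using ka2[of "int y"] by fastforce
    then show "y \<le> nat B" by simp
  qed
  show ?thesis unfolding MM GB using B0 by simp
qed


end
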